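(* Let $f,g$ satisfy (H1) and (H2) (see context). Let $(\gamma_n)_{n\ge1}$ be positive non-increasing stepsizes with $\gamma_n\in(0,1/L]$, $\theta_0\in\mathrm{Dom}(g)$, and let $\theta_{n+1}=\mathrm{Prox}_{\gamma_{n+1}}(\theta_n-\gamma_{n+1}H_{n+1})$ for some $H_{n+1}\in\Theta$, with $\eta_{n+1}=H_{n+1}-\nabla f(\theta_n)$. Let $\mathcal L=\mathrm{argmin}_\Theta F$. (i) For any $\theta_\star\in\mathcal L$ and any $n\ge m\ge0$, $$\|\theta_{n+1}-\theta_\star\|^2\le\|\theta_m-\theta_\star\|^2-2\sum_{k=m}^n\gamma_{k+1}\langle T_{\gamma_{k+1}}(\theta_k)-\theta_\star,\eta_{k+1}\rangle+2\sum_{k=m}^n\gamma_{k+1}^2\|\eta_{k+1}\|^2.$$ (ii) Assume that for any $\theta_\star\in\mathcal L$ the series $\sum_{n\ge0}\gamma_{n+1}\langle T_{\gamma_{n+1}}(\theta_n)-\theta_\star,\eta_{n+1}\rangle$ converges and $\sum_{n\ge0}\gamma_{n+1}^2\|\eta_{n+1}\|^2<\infty$. Then for any $\theta_\star\in\mathcal L$, $\lim_n\|\theta_n-\theta_\star\|$ exists. If in addition $\sum_n\gamma_n=+\infty$, there exists $\theta_\infty\in\mathcal L$ with $\lim_n\theta_n=\theta_\infty$.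
   Context: $\Theta$ is a finite-dimensional Euclidean space with inner product $\langle\cdot,\cdot\rangle$ and norm $\|\cdot\|$. (H1): $g:\Theta\to(-\infty,+\infty]$ convex, not identically $+\infty$, lower semicontinuous; $f:\Theta\to\mathbb R$ continuously differentiable with $L$-Lipschitz gradient. (H2): $f$ convex and $\mathrm{argmin}_\Theta F\neq\emptyset$, $F=f+g$. $\mathrm{Dom}(g)=\{\theta:|g(\theta)|<\infty\}$. $\mathrm{Prox}_\gamma(\theta)=\mathrm{argmin}_{\vartheta}\{g(\vartheta)+\frac1{2\gamma}\|\vartheta-\theta\|^2\}$, $T_\gamma(\theta)=\mathrm{Prox}_\gamma(\theta-\gamma\nabla f(\theta))$. *)

theory Defs
  imports "HOL-Analysis.Analysis"
begin

definition convex_ext :: "('a::real_vector \<Rightarrow> ereal) \<Rightarrow> bool" where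
  "convex_ext g \<longleftrightarrow> (\<forall>x y u. 0 \<le> u \<and> u \<le> 1 \<longrightarrow>
      g ((1 - u) *\<^sub>R x + u *\<^sub>R y) \<le> ereal (1 - u) * g x + ereal u * g y)"

definition lsc_ext :: "('a::topological_space \<Rightarrow> ereal) \<Rightarrow> bool" where
  "lsc_ext g \<longleftrightarrow> (\<forall>c::real. closed {x. g x \<le> ereal c})"

definition dom_ext :: "('a \<Rightarrow> ereal) \<Rightarrow> 'a set" where
  "dom_ext g = {x. \<bar>g x\<bar> < \<infinity>}"

definition prox_set :: "('a::real_normed_vector \<Rightarrow> ereal) \<Rightarrow> real \<Rightarrow> 'a \<Rightarrow> 'a set" where
  "prox_set g \<gamma> x = {v. \<forall>w. g v + ereal (norm (v - x) ^ 2 / (2 * \<gamma>))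
                             \<le> g w + ereal (norm (w - x) ^ 2 / (2 * \<gamma>))}"

text \<open>Prox operator (the argmin is a singleton under (H1)).\<close>
definition prox :: "('a::real_normed_vector \<Rightarrow> ereal) \<Rightarrow> real \<Rightarrow> 'a \<Rightarrow> 'a" where
  "prox g \<gamma> x = (THE v. v \<in> prox_set g \<gamma> x)"

definition Tmap :: "('a::real_normed_vector \<Rightarrow> ereal) \<Rightarrow> ('a \<Rightarrow> 'a) \<Rightarrow> real \<Rightarrow> 'a \<Rightarrow> 'a" where
  "Tmap g df \<gamma> x = prox g \<gamma> (x - \<gamma> *\<^sub>R df x)"

end

theory Submission
  imports Defs
begin

lemma line_deriv:
  fixes f :: "'a::euclidean_space \<Rightarrow> real"
  assumes "\<forall>x. (f has_derivative (\<lambda>h. df x \<bullet> h)) (at x)"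
  shows "((\<lambda>t. f (x + t *\<^sub>R d)) has_real_derivative (df (x + t *\<^sub>R d) \<bullet> d)) (at t within S)"
proof -
  have 1: "((\<lambda>t. x + t *\<^sub>R d) has_derivative (\<lambda>h. h *\<^sub>R d)) (at t within S)"
    by (auto intro!: derivative_eq_intros)
  have "((\<lambda>t. f (x + t *\<^sub>R d)) has_derivative (\<lambda>h. df (x + t *\<^sub>R d) \<bullet> (h *\<^sub>R d))) (at t within S)"
    using has_derivative_compose[OF 1] assms by blast
  then show ?thesis unfolding has_field_derivative_def
    by (simp add: mult.commute[of _ "df (x + t *\<^sub>R d) \<bullet> d"])
qed

lemma grad_ineq:
  fixes f :: "'a::euclidean_space \<Rightarrow> real"
  assumes "\<forall>x. (f has_derivative (\<lambda>h. df x \<bullet> h)) (at x)" and "convex_on UNIV f"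
  shows "f y \<ge> f x + df x \<bullet> (y - x)"
proof -
  define \<phi> where "\<phi> t = f (x + t *\<^sub>R (y - x))" for t
  have cv: "convex_on UNIV \<phi>"
  proof (rule convex_onI)
    fix t a b :: real assume "t > 0" "t < 1"
    have "\<phi> ((1 - t) *\<^sub>R a + t *\<^sub>R b) = f ((1 - t) *\<^sub>R (x + a *\<^sub>R (y - x)) + t *\<^sub>R (x + b *\<^sub>R (y - x)))"
      unfolding \<phi>_def by (simp add: algebra_simps)
    also have "\<dots> \<le> (1 - t) * \<phi> a + t * \<phi> b"
      unfolding \<phi>_def using convex_onD[OF assms(2)] \<open>t>0\<close> \<open>t<1\<close> by simp
    finally show "\<phi> ((1 - t) *\<^sub>R a + t *\<^sub>R b) \<le> (1 - t) * \<phi> a + t * \<phi> b" .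
  qed simp
  have d: "(\<phi> has_real_derivative (df x \<bullet> (y - x))) (at 0 within UNIV)"
    unfolding \<phi>_def using line_deriv[OF assms(1), of x "y - x" 0 UNIV] by simp
  have "\<phi> 1 - \<phi> 0 \<ge> (df x \<bullet> (y - x)) * (1 - 0)"
    by (rule convex_on_imp_above_tangent[OF cv _ _ _ d]) auto
  then show ?thesis unfolding \<phi>_def by simp
qed

lemma descent:
  fixes f :: "'a::euclidean_space \<Rightarrow> real"
  assumes "\<forall>x. (f has_derivative (\<lambda>h. df x \<bullet> h)) (at x)"
    and "\<forall>x y. norm (df x - df y) \<le> L * norm (x - y)"
  shows "f y \<le> f x + df x \<bullet> (y - x) + L / 2 * norm (y - x) ^ 2"
proof -
  define d where "d = y - x"
  define \<phi> where "\<phi> t = f (x + t *\<^sub>R d) - t * (df x \<bullet> d) - L / 2 * t^2 * norm d ^ 2" for t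
  have "\<phi> 0 \<ge> \<phi> 1"
  proof (rule DERIV_nonpos_imp_nonincreasing[of 0 1 \<phi>])
    fix t :: real assume t: "0 \<le> t" "t \<le> 1"
    have D: "(\<phi> has_real_derivative (df (x + t *\<^sub>R d) \<bullet> d - df x \<bullet> d - L * t * norm d ^ 2)) (at t)"
      unfolding \<phi>_def
      by (rule derivative_eq_intros line_deriv[OF assms(1)] | simp)+
    have "df (x + t *\<^sub>R d) \<bullet> d - df x \<bullet> d = (df (x + t *\<^sub>R d) - df x) \<bullet> d"
      by (simp add: inner_diff_left)
    also have "\<dots> \<le> norm (df (x + t *\<^sub>R d) - df x) * norm d"
      by (rule norm_cauchy_schwarz)
    also have "\<dots> \<le> (L * norm (t *\<^sub>R d)) * norm d"
      using assms(2)[rule_format, of "x + t *\<^sub>R d" x] by (intro mult_right_mono) auto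
    also have "\<dots> = L * t * norm d ^ 2" using t by (simp add: power2_eq_square)
    finally have "df (x + t *\<^sub>R d) \<bullet> d - df x \<bullet> d - L * t * norm d ^ 2 \<le> 0" by simp
    then show "\<exists>z. (\<phi> has_real_derivative z) (at t) \<and> z \<le> 0" using D by blast
  qed simp
  then show ?thesis unfolding \<phi>_def d_def by simp
qed

lemma lower_ball:
  fixes g :: "'a::euclidean_space \<Rightarrow> ereal"
  assumes nm: "\<forall>x. g x \<noteq> -\<infinity>" and lsc: "lsc_ext g"
  shows "\<exists>m. \<forall>v\<in>cball x0 1. ereal m \<le> g v"
proof (rule ccontr)
  assume "\<not> ?thesis"
  then have "\<forall>n::nat. \<exists>v. v \<in> cball x0 1 \<and> g v < ereal (- real n)"
    by (metis linorder_not_le)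
  then obtain v where v: "\<And>n. v n \<in> cball x0 1" "\<And>n. g (v n) < ereal (- real n)"
    by metis
  have "bounded (range v)" using v(1) bounded_cball bounded_subset by blast
  then obtain l r where r: "strict_mono r" and l: "(v \<circ> r) \<longlonglongrightarrow> l"
    using bounded_imp_convergent_subsequence by blast
  have "g l \<le> ereal c" for c
  proof -
    have cl: "closed {x. g x \<le> ereal c}" using lsc unfolding lsc_ext_def by blast
    have "eventually (\<lambda>j. (v \<circ> r) j \<in> {x. g x \<le> ereal c}) sequentially"
    proof (rule eventually_sequentiallyI[of "nat \<lceil>- c\<rceil>"])
      fix j assume j: "nat \<lceil>- c\<rceil> \<le> j"
      have "j \<le> r j" using r by (simp add: seq_suble)
      then have "- real (r j) \<le> c" using j by linarith
      then show "(v \<circ> r) j \<in> {x. g x \<le> ereal c}"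
        using v(2)[of "r j"] by (auto intro: order.trans[OF less_imp_le])
    qed
    from Lim_in_closed_set[OF cl this _ l] show ?thesis by simp
  qed
  then have "g l = -\<infinity>" by (rule ereal_bot)
  then show False using nm by simp
qed

lemma lower_lin:
  fixes g :: "'a::euclidean_space \<Rightarrow> ereal"
  assumes nm: "\<forall>x. g x \<noteq> -\<infinity>" and cv: "convex_ext g" and fin: "g x0 = ereal a"
    and m: "\<forall>v\<in>cball x0 1. ereal m \<le> g v"
  shows "ereal (m - (a - m) * norm (v - x0)) \<le> g v"
proof -
  have "ereal m \<le> g x0" using m by simp
  then have am: "m \<le> a" using fin by simp
  show ?thesis
  proof (cases "norm (v - x0) \<le> 1")
    case True
    then have "ereal m \<le> g v" using m by (simp add: dist_norm norm_minus_commute)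
    moreover have "m - (a - m) * norm (v - x0) \<le> m" using am by simp
    ultimately show ?thesis by (meson ereal_less_eq(3) order.trans)
  next
    case False
    define R where "R = norm (v - x0)"
    have R: "R > 1" using False R_def by simp
    show ?thesis
    proof (cases "g v = \<infinity>")
      case True then show ?thesis by simp
    next
      case False
      then obtain b where b: "g v = ereal b" using assms by (cases "g v") auto
      define w where "w = (1 - 1/R) *\<^sub>R x0 + (1/R) *\<^sub>R v"
      have "w - x0 = (1/R) *\<^sub>R (v - x0)" unfolding w_def by (simp add: algebra_simps)
      then have "norm (w - x0) = 1" using R by (auto simp add: R_def)
      then have "ereal m \<le> g w" using m by (simp add: dist_norm norm_minus_commute)
      also have "g w \<le> ereal (1 - 1/R) * g x0 + ereal (1/R) * g v"
        using cv R unfolding convex_ext_def w_def by auto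
      finally have "m \<le> (1 - 1/R) * a + (1/R) * b" using fin b by simp
      then have "R * m \<le> R * ((1 - 1/R) * a + (1/R) * b)" using R by simp
      then have "R * m \<le> (R - 1) * a + b" using R by (simp add: algebra_simps)
      then have "m - (a - m) * R \<le> b" using am R by (simp add: algebra_simps)
      then show ?thesis using b R_def by simp
    qed
  qed
qed

lemma efin: "(x::ereal) \<noteq> \<infinity> \<Longrightarrow> x \<noteq> -\<infinity> \<Longrightarrow> x = ereal (real_of_ereal x)"
  by (cases x) auto

lemma parallelo:
  fixes u v x :: "'a::real_inner"
  shows "norm ((1/2) *\<^sub>R (u + v) - x) ^ 2 = (norm (u - x) ^ 2 + norm (v - x) ^ 2) / 2 - norm (u - v) ^ 2 / 4"
proof -
  have h: "(1/2) *\<^sub>R x + (1/2) *\<^sub>R x = x" by (metis scaleR_add_left field_sum_of_halves scaleR_one)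
  have e: "(1/2) *\<^sub>R (u + v) - x = (1/2) *\<^sub>R ((u - x) + (v - x))" using h by (simp add: algebra_simps)
  have e2: "u - v = (u - x) - (v - x)" by simp
  show ?thesis unfolding e e2
    by (simp add: power2_norm_eq_inner inner_add_left inner_add_right inner_diff_left inner_diff_right
        inner_commute field_simps)
qed

lemma midpoint_ineq:
  fixes g :: "'a::euclidean_space \<Rightarrow> ereal"
  assumes nm: "\<forall>x. g x \<noteq> -\<infinity>" and cv: "convex_ext g" and gam: "\<gamma> > 0"
    and gu: "g u = ereal a" and gv: "g v = ereal b"
    and low: "\<And>w. g w \<noteq> \<infinity> \<Longrightarrow> c \<le> real_of_ereal (g w) + norm (w - x) ^ 2 / (2 * \<gamma>)"
  shows "norm (u - v) ^ 2 \<le> 4 * \<gamma> * ((a + norm (u - x) ^ 2 / (2 * \<gamma>)) + (b + norm (v - x) ^ 2 / (2 * \<gamma>)) - 2 * c)"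
proof -
  define w where "w = (1/2) *\<^sub>R (u + v)"
  have "w = (1 - 1/2) *\<^sub>R u + (1/2) *\<^sub>R v" unfolding w_def by (simp add: scaleR_add_right)
  then have "g w \<le> ereal (1 - 1/2) * g u + ereal (1/2) * g v"
    using cv[unfolded convex_ext_def, rule_format, of "1/2" u v] by simp
  then have gw: "g w \<le> ereal ((a + b) / 2)" using gu gv by (simp add: field_simps)
  then have "g w \<noteq> \<infinity>" by auto
  then have gw': "g w = ereal (real_of_ereal (g w))" using nm efin by blast
  have "c \<le> real_of_ereal (g w) + norm (w - x) ^ 2 / (2 * \<gamma>)" using low \<open>g w \<noteq> \<infinity>\<close> by blast
  also have "\<dots> \<le> (a + b) / 2 + norm (w - x) ^ 2 / (2 * \<gamma>)" using gw gw' by (metis add_right_mono ereal_less_eq(3))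
  also have "norm (w - x) ^ 2 = (norm (u - x) ^ 2 + norm (v - x) ^ 2) / 2 - norm (u - v) ^ 2 / 4"
    unfolding w_def by (rule parallelo)
  finally have "c \<le> (a + b) / 2 + ((norm (u - x) ^ 2 + norm (v - x) ^ 2) / 2 - norm (u - v) ^ 2 / 4) / (2 * \<gamma>)" .
  then have "8*\<gamma>*c \<le> 8*\<gamma>*((a + b) / 2 + ((norm (u - x) ^ 2 + norm (v - x) ^ 2) / 2 - norm (u - v) ^ 2 / 4) / (2 * \<gamma>))"
    using gam by (intro mult_left_mono) auto
  also have "\<dots> = 4*\<gamma>*(a+b) + 2*(norm (u - x) ^ 2 + norm (v - x) ^ 2) - norm (u - v) ^ 2"
    using gam by (simp add: field_simps)
  finally have *: "8*\<gamma>*c \<le> 4*\<gamma>*(a+b) + 2*(norm (u - x) ^ 2 + norm (v - x) ^ 2) - norm (u - v) ^ 2" .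
  have "4 * \<gamma> * ((a + norm (u - x) ^ 2 / (2 * \<gamma>)) + (b + norm (v - x) ^ 2 / (2 * \<gamma>)) - 2 * c)
     = 4*\<gamma>*(a+b) + 2*(norm (u - x) ^ 2 + norm (v - x) ^ 2) - 8*\<gamma>*c"
    using gam by (simp add: field_simps)
  then show ?thesis using * by linarith
qed

lemma prox_exists:
  fixes g :: "'a::euclidean_space \<Rightarrow> ereal"
  assumes nm: "\<forall>x. g x \<noteq> -\<infinity>" and pr: "\<exists>x. g x \<noteq> \<infinity>" and cv: "convex_ext g"
    and lsc: "lsc_ext g" and gam: "\<gamma> > 0"
  shows "\<exists>v. v \<in> prox_set g \<gamma> x"
proof -
  define q where "q w = norm (w - x) ^ 2 / (2 * \<gamma>)" for w
  obtain x0 where "g x0 \<noteq> \<infinity>" using pr by blast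
  then obtain a where ga: "g x0 = ereal a" using nm by (cases "g x0") auto
  obtain m where m: "\<forall>v\<in>cball x0 1. ereal m \<le> g v" using lower_ball[OF nm lsc] by blast
  define b where "b = a - m"
  have b0: "b \<ge> 0" using m ga b_def by (metis centre_in_cball ereal_less_eq(3) diff_ge_0_iff_ge zero_le_one)
  define d where "d = norm (x0 - x)"
  define C where "C = m - b * d - \<gamma> * b^2 / 2"
  define S where "S = {real_of_ereal (g w) + q w | w. g w \<noteq> \<infinity>}"
  have low: "C \<le> real_of_ereal (g w) + q w" if "g w \<noteq> \<infinity>" for w
  proof -
    have gw: "g w = ereal (real_of_ereal (g w))" using that nm efin by blast
    have "ereal (m - b * norm (w - x0)) \<le> g w" using lower_lin[OF nm cv ga m] b_def by simp
    then have 1: "m - b * norm (w - x0) \<le> real_of_ereal (g w)" using gw by (metis ereal_less_eq(3))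
    have "norm (w - x0) \<le> norm (w - x) + d" unfolding d_def
      using norm_triangle_ineq[of "w - x" "x - x0"] by (simp add: norm_minus_commute)
    then have 2: "b * norm (w - x0) \<le> b * norm (w - x) + b * d" using b0
      by (metis distrib_left mult_left_mono)
    have "0 \<le> (norm (w - x) - \<gamma> * b)^2" by simp
    then have "2 * \<gamma> * (b * norm (w - x)) \<le> norm (w - x)^2 + (\<gamma> * b)^2"
      by (simp add: power2_diff algebra_simps)
    then have 3: "b * norm (w - x) \<le> q w + \<gamma> * b^2 / 2"
      unfolding q_def using gam by (simp add: field_simps power2_eq_square)
    show ?thesis using 1 2 3 unfolding C_def by linarith
  qed
  have Sne: "S \<noteq> {}" using \<open>g x0 \<noteq> \<infinity>\<close> S_def by blast
  have Sbdd: "bdd_below S" unfolding S_def bdd_below_def using low by blast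
  define c where "c = Inf S"
  have cle: "c \<le> real_of_ereal (g w) + q w" if "g w \<noteq> \<infinity>" for w
    unfolding c_def using Sbdd that by (intro cInf_lower) (auto simp: S_def)
  have "\<forall>n::nat. \<exists>w. g w \<noteq> \<infinity> \<and> real_of_ereal (g w) + q w < c + inverse (real (Suc n))"
  proof
    fix n :: nat
    have "Inf S < c + inverse (real (Suc n))" unfolding c_def by simp
    then obtain s where "s \<in> S" "s < c + inverse (real (Suc n))" using cInf_lessD[OF Sne] by blast
    then show "\<exists>w. g w \<noteq> \<infinity> \<and> real_of_ereal (g w) + q w < c + inverse (real (Suc n))"
      unfolding S_def by blast
  qed
  then obtain u where u: "\<And>n. g (u n) \<noteq> \<infinity>" "\<And>n. real_of_ereal (g (u n)) + q (u n) < c + inverse (real (Suc n))"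
    by metis
  have mid: "norm (u i - u j) ^ 2 \<le> 4 * \<gamma> * (inverse (real (Suc i)) + inverse (real (Suc j)))" for i j
  proof -
    have gi: "g (u i) = ereal (real_of_ereal (g (u i)))" using u nm efin by blast
    have gj: "g (u j) = ereal (real_of_ereal (g (u j)))" using u nm efin by blast
    have "norm (u i - u j) ^ 2 \<le> 4 * \<gamma> * ((real_of_ereal (g (u i)) + q (u i)) + (real_of_ereal (g (u j)) + q (u j)) - 2 * c)"
      unfolding q_def by (rule midpoint_ineq[OF nm cv gam gi gj]) (use cle in \<open>auto simp: q_def\<close>)
    also have "\<dots> \<le> 4 * \<gamma> * (inverse (real (Suc i)) + inverse (real (Suc j)))"
      using u(2)[of i] u(2)[of j] gam by (intro mult_left_mono) auto
    finally show ?thesis .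
  qed
  have "Cauchy u"
  proof (rule CauchyI)
    fix e :: real assume e: "e > 0"
    then have "e^2 / (8 * \<gamma>) > 0" using gam by simp
    then obtain N where N: "inverse (real (Suc N)) < e^2 / (8 * \<gamma>)" using reals_Archimedean by blast
    show "\<exists>M. \<forall>i\<ge>M. \<forall>j\<ge>M. norm (u i - u j) < e"
    proof (intro exI allI impI)
      fix i j assume ij: "N \<le> i" "N \<le> j"
      have "inverse (real (Suc i)) \<le> inverse (real (Suc N))" using ij by (simp add: le_imp_inverse_le)
      moreover have "inverse (real (Suc j)) \<le> inverse (real (Suc N))" using ij by (simp add: le_imp_inverse_le)
      ultimately have "norm (u i - u j) ^ 2 \<le> 4 * \<gamma> * (2 * inverse (real (Suc N)))"
        using mid[of i j] gam by (smt (verit) mult_left_mono)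
      also have "\<dots> < 4 * \<gamma> * (2 * (e^2 / (8 * \<gamma>)))" using N gam by (intro mult_strict_left_mono) auto
      also have "\<dots> = e^2" using gam by simp
      finally show "norm (u i - u j) < e" using e by (smt (verit) power_mono norm_ge_zero)
    qed
  qed
  then obtain vs where vs: "u \<longlonglongrightarrow> vs" using Cauchy_convergent_iff convergent_def by blast
  have qcont: "(\<lambda>n. q (u n)) \<longlonglongrightarrow> q vs" unfolding q_def using gam by (auto intro!: tendsto_intros vs)
  have gvs: "g vs \<le> ereal (c - q vs) + ereal e" if e: "e > 0" for e
  proof -
    have cl: "closed {w. g w \<le> ereal (c - q vs + e)}" using lsc unfolding lsc_ext_def by blast
    have "(\<lambda>n. c + inverse (real (Suc n)) - q (u n)) \<longlonglongrightarrow> c + 0 - q vs"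
      by (intro tendsto_intros LIMSEQ_inverse_real_of_nat qcont)
    then have "eventually (\<lambda>n. c + inverse (real (Suc n)) - q (u n) < c - q vs + e) sequentially"
      using e by (intro order_tendstoD) auto
    then have ev: "eventually (\<lambda>n. u n \<in> {w. g w \<le> ereal (c - q vs + e)}) sequentially"
    proof (rule eventually_mono)
      fix n assume "c + inverse (real (Suc n)) - q (u n) < c - q vs + e"
      then have "real_of_ereal (g (u n)) \<le> c - q vs + e" using u(2)[of n] by linarith
      moreover have "g (u n) = ereal (real_of_ereal (g (u n)))" using u nm efin by blast
      ultimately show "u n \<in> {w. g w \<le> ereal (c - q vs + e)}" by (metis ereal_less_eq(3) mem_Collect_eq)
    qed
    have "vs \<in> {w. g w \<le> ereal (c - q vs + e)}" by (rule Lim_in_closed_set[OF cl ev _ vs]) simp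
    then show ?thesis by simp
  qed
  have gvs2: "g vs \<le> ereal (c - q vs)" by (rule ereal_le_epsilon2) (use gvs in auto)
  have "vs \<in> prox_set g \<gamma> x"
    unfolding prox_set_def
  proof (intro CollectI allI)
    fix w
    show "g vs + ereal (norm (vs - x) ^ 2 / (2 * \<gamma>)) \<le> g w + ereal (norm (w - x) ^ 2 / (2 * \<gamma>))"
    proof (cases "g w = \<infinity>")
      case True then show ?thesis by simp
    next
      case False
      have gw: "g w = ereal (real_of_ereal (g w))" using False nm efin by blast
      have "g vs + ereal (q vs) \<le> ereal (c - q vs) + ereal (q vs)" using gvs2 by (rule add_right_mono)
      also have "\<dots> = ereal c" by simp
      also have "\<dots> \<le> ereal (real_of_ereal (g w) + q w)" using cle[OF False] by simp
      also have "\<dots> = g w + ereal (q w)" using gw by (metis plus_ereal.simps(1))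
      finally show ?thesis unfolding q_def .
    qed
  qed
  then show ?thesis by blast
qed

lemma norm_add_sq:
  fixes p r :: "'a::real_inner"
  shows "norm (p + q) ^ 2 = norm p ^ 2 + norm q ^ 2 + 2 * (p \<bullet> q)"
  using dot_norm[of p q] by simp

lemma norm_add_scale_sq:
  fixes p r :: "'a::real_inner"
  shows "norm (p + t *\<^sub>R r) ^ 2 = norm p ^ 2 + 2 * t * (p \<bullet> r) + t^2 * norm r ^ 2"
  unfolding norm_add_sq by (simp add: power_mult_distrib)


lemma aux_div:
  fixes P I N t g :: real
  assumes "g \<noteq> 0"
  shows "(P + 2*t*I + t^2*N)/(2*g) = P/(2*g) + t*(I/g) + t*(t*(N/(2*g)))"
  using assms by (simp add: add_divide_distrib power2_eq_square)

lemma lin_aux: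
  fixes a b t P Q X Y :: real
  assumes "a + P \<le> (1-t)*a + t*b + Q" "Q = P + t*X + t*(t*Y)"
  shows "t*a \<le> t*(b + X + t*Y)"
  using assms by (simp add: algebra_simps)

lemma small_t:
  fixes A B K :: real
  assumes K: "K \<ge> 0" and h: "\<And>t. 0 < t \<Longrightarrow> t \<le> 1 \<Longrightarrow> A \<le> B + t * K"
  shows "A \<le> B"
proof (rule field_le_epsilon)
  fix e :: real assume e: "e > 0"
  define t where "t = min 1 (e / (K + 1))"
  have t: "0 < t" "t \<le> 1" using e K by (auto simp: t_def)
  have "t * K \<le> e / (K + 1) * K" using K by (intro mult_right_mono) (auto simp: t_def)
  also have "\<dots> \<le> e" using e K by (simp add: field_simps)
  finally show "A \<le> B + e" using h[OF t] by linarith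
qed

lemma prox_fin:
  fixes g :: "'a::euclidean_space \<Rightarrow> ereal"
  assumes pr: "\<exists>x. g x \<noteq> \<infinity>" and v: "v \<in> prox_set g \<gamma> x"
  shows "g v \<noteq> \<infinity>"
proof
  assume "g v = \<infinity>"
  obtain x1 where "g x1 \<noteq> \<infinity>" using pr by blast
  moreover have "g v + ereal (norm (v - x) ^ 2 / (2 * \<gamma>)) \<le> g x1 + ereal (norm (x1 - x) ^ 2 / (2 * \<gamma>))"
    using v unfolding prox_set_def by blast
  ultimately show False using \<open>g v = \<infinity>\<close> by simp
qed

lemma prox_ineq:
  fixes g :: "'a::euclidean_space \<Rightarrow> ereal"
  assumes nm: "\<forall>x. g x \<noteq> -\<infinity>" and cv: "convex_ext g" and gam: "\<gamma> > 0"
    and v: "v \<in> prox_set g \<gamma> x" and gv: "g v = ereal a" and gw: "g w = ereal b"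
  shows "b \<ge> a + ((x - v) \<bullet> (w - v)) / \<gamma>"
proof -
  define p where "p = v - x"
  define r where "r = w - v"
  have key: "a \<le> b + (p \<bullet> r) / \<gamma> + t * (norm r ^ 2 / (2 * \<gamma>))" if t: "0 < t" "t \<le> 1" for t
  proof -
    define z where "z = (1 - t) *\<^sub>R v + t *\<^sub>R w"
    have "g z \<le> ereal (1 - t) * g v + ereal t * g w"
      using cv[unfolded convex_ext_def, rule_format, of t v w] t unfolding z_def by simp
    then have gz: "g z \<le> ereal ((1 - t) * a + t * b)" using gv gw by simp
    have "g v + ereal (norm (v - x) ^ 2 / (2 * \<gamma>)) \<le> g z + ereal (norm (z - x) ^ 2 / (2 * \<gamma>))"
      using v unfolding prox_set_def by blast
    also have "\<dots> \<le> ereal ((1 - t) * a + t * b) + ereal (norm (z - x) ^ 2 / (2 * \<gamma>))"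
      using gz by (rule add_right_mono)
    finally have 1: "a + norm p ^ 2 / (2 * \<gamma>) \<le> (1 - t) * a + t * b + norm (z - x) ^ 2 / (2 * \<gamma>)"
      unfolding p_def using gv by simp
    have e: "z - x = p + t *\<^sub>R r" unfolding z_def p_def r_def by (simp add: algebra_simps)
    have eqn: "norm (z - x) ^ 2 = norm p ^ 2 + 2 * t * (p \<bullet> r) + t^2 * norm r ^ 2"
      unfolding e by (rule norm_add_scale_sq)
    have "norm (z - x) ^ 2 / (2 * \<gamma>) = norm p ^ 2 / (2 * \<gamma>) + t * ((p \<bullet> r) / \<gamma>) + t * (t * (norm r ^ 2 / (2 * \<gamma>)))"
      unfolding eqn by (rule aux_div) (use gam in simp)
    then have "t * a \<le> t * (b + (p \<bullet> r) / \<gamma> + t * (norm r ^ 2 / (2 * \<gamma>)))"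
      by (rule lin_aux[OF 1])
    then show ?thesis using t by simp
  qed
  have "a \<le> b + (p \<bullet> r) / \<gamma>" by (rule small_t[OF _ key]) (use gam in simp_all)
  moreover have "p \<bullet> r = - ((x - v) \<bullet> (w - v))" unfolding p_def r_def by (simp add: inner_diff_left)
  ultimately show ?thesis by simp
qed

lemma inner_id1:
  fixes x1 x2 v1 v2 :: "'a::real_inner"
  shows "(x1 - v1) \<bullet> (v2 - v1) + (x2 - v2) \<bullet> (v1 - v2) = (v1 - v2) \<bullet> (v1 - v2) - (x1 - x2) \<bullet> (v1 - v2)"
proof -
  have "(x1 - v1) \<bullet> (v2 - v1) + (x2 - v2) \<bullet> (v1 - v2) = ((x2 - v2) - (x1 - v1)) \<bullet> (v1 - v2)"
    by (metis inner_diff_left inner_minus_right minus_diff_eq uminus_add_conv_diff)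
  also have "(x2 - v2) - (x1 - v1) = (v1 - v2) - (x1 - x2)" by (simp add: algebra_simps)
  finally show ?thesis by (simp add: inner_diff_left)
qed

lemma prox_set_nonexp:
  fixes g :: "'a::euclidean_space \<Rightarrow> ereal"
  assumes nm: "\<forall>x. g x \<noteq> -\<infinity>" and pr: "\<exists>x. g x \<noteq> \<infinity>" and cv: "convex_ext g" and gam: "\<gamma> > 0"
    and v1: "v1 \<in> prox_set g \<gamma> x1" and v2: "v2 \<in> prox_set g \<gamma> x2"
  shows "norm (v1 - v2) \<le> norm (x1 - x2)"
proof -
  have g1: "g v1 = ereal (real_of_ereal (g v1))" using prox_fin[OF pr v1] nm efin by blast
  have g2: "g v2 = ereal (real_of_ereal (g v2))" using prox_fin[OF pr v2] nm efin by blast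
  have i1: "real_of_ereal (g v2) \<ge> real_of_ereal (g v1) + ((x1 - v1) \<bullet> (v2 - v1)) / \<gamma>"
    by (rule prox_ineq[OF nm cv gam v1 g1 g2])
  have i2: "real_of_ereal (g v1) \<ge> real_of_ereal (g v2) + ((x2 - v2) \<bullet> (v1 - v2)) / \<gamma>"
    by (rule prox_ineq[OF nm cv gam v2 g2 g1])
  have "((x1 - v1) \<bullet> (v2 - v1)) / \<gamma> + ((x2 - v2) \<bullet> (v1 - v2)) / \<gamma> \<le> 0" using i1 i2 by linarith
  then have "((x1 - v1) \<bullet> (v2 - v1) + (x2 - v2) \<bullet> (v1 - v2)) / \<gamma> \<le> 0" by (simp add: add_divide_distrib)
  then have "(x1 - v1) \<bullet> (v2 - v1) + (x2 - v2) \<bullet> (v1 - v2) \<le> 0" using gam by (simp add: divide_le_0_iff)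
  then have "(v1 - v2) \<bullet> (v1 - v2) \<le> (x1 - x2) \<bullet> (v1 - v2)" unfolding inner_id1 by simp
  also have "\<dots> \<le> norm (x1 - x2) * norm (v1 - v2)" by (rule norm_cauchy_schwarz)
  finally have "norm (v1 - v2) * norm (v1 - v2) \<le> norm (x1 - x2) * norm (v1 - v2)"
    by (simp add: power2_norm_eq_inner[symmetric] power2_eq_square)
  then show ?thesis
    by (metis mult_right_le_imp_le norm_ge_zero order_le_less mult_zero_right mult_zero_left)
qed

lemma prox_mem:
  fixes g :: "'a::euclidean_space \<Rightarrow> ereal"
  assumes nm: "\<forall>x. g x \<noteq> -\<infinity>" and pr: "\<exists>x. g x \<noteq> \<infinity>" and cv: "convex_ext g"
    and lsc: "lsc_ext g" and gam: "\<gamma> > 0"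
  shows "prox g \<gamma> x \<in> prox_set g \<gamma> x"
proof -
  obtain v where v: "v \<in> prox_set g \<gamma> x" using prox_exists[OF nm pr cv lsc gam] by blast
  have "\<exists>!v. v \<in> prox_set g \<gamma> x"
  proof (rule ex1I[where a=v and P="\<lambda>w. w \<in> prox_set g \<gamma> x"])
    show "v \<in> prox_set g \<gamma> x" by (rule v)
    fix w assume w: "w \<in> prox_set g \<gamma> x"
    show "w = v" using prox_set_nonexp[OF nm pr cv gam w v] by simp
  qed
  then show ?thesis unfolding prox_def by (rule theI')
qed

lemma key_lin:
  fixes fv a fts gts fth A B Hv gam L n1 n2 n3 I :: real
  assumes P: "gts \<ge> a + (A - gam * Hv) / gam"
    and D: "fv \<le> fth + B + L / 2 * n1"
    and C: "fts \<ge> fth + B'"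
    and BB: "B - B' = Dv"
    and N: "n2 = n1 + n3 + 2 * A'"
    and AA: "A' = - A"
    and gam: "gam > 0" and gL: "gam * L \<le> 1" and L: "L > 0" and n1: "n1 \<ge> 0"
    and E: "I = - Hv - Dv"
  shows "n3 \<le> n2 - 2 * gam * ((fv + a) - (fts + gts)) - 2 * gam * I"
proof -
  have "(A - gam * Hv) / gam = A / gam - Hv" using gam by (simp add: diff_divide_distrib)
  then have 1: "(fv + a) - (fts + gts) \<le> Dv + L / 2 * n1 - A / gam + Hv" using P D C BB by linarith
  have "2 * gam * ((fv + a) - (fts + gts)) \<le> 2 * gam * (Dv + L / 2 * n1 - A / gam + Hv)"
    using 1 gam by (intro mult_left_mono) auto
  also have "\<dots> = 2 * gam * Dv + (gam * L) * n1 - 2 * A + 2 * gam * Hv"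
    using gam by (simp add: algebra_simps)
  also have "\<dots> \<le> 2 * gam * Dv + n1 - 2 * A + 2 * gam * Hv"
    using mult_right_mono[OF gL n1] by linarith
  finally have 2: "2 * gam * ((fv + a) - (fts + gts)) \<le> 2 * gam * Dv + n1 - 2 * A + 2 * gam * Hv" .
  have "2 * gam * I = - 2 * gam * Hv - 2 * gam * Dv" unfolding E by (simp add: algebra_simps)
  then show ?thesis using 2 N AA by linarith
qed

lemma key_step:
  fixes f :: "'a::euclidean_space \<Rightarrow> real" and df :: "'a \<Rightarrow> 'a" and g :: "'a \<Rightarrow> ereal"
  assumes nm: "\<forall>x. g x \<noteq> -\<infinity>" and pr: "\<exists>x. g x \<noteq> \<infinity>" and cv: "convex_ext g"
    and lsc: "lsc_ext g"
    and f_grad: "\<forall>x. (f has_derivative (\<lambda>h. df x \<bullet> h)) (at x)"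
    and L_pos: "L > 0"
    and f_lip: "\<forall>x y. norm (df x - df y) \<le> L * norm (x - y)"
    and f_convex: "convex_on UNIV f"
    and gam: "\<gamma> > 0" and gL: "\<gamma> \<le> 1 / L"
    and gts: "g ts = ereal gt"
  shows "g (prox g \<gamma> (\<theta> - \<gamma> *\<^sub>R H)) \<noteq> \<infinity>"
    "norm (prox g \<gamma> (\<theta> - \<gamma> *\<^sub>R H) - ts) ^ 2
      \<le> norm (\<theta> - ts) ^ 2
         - 2 * \<gamma> * ((f (prox g \<gamma> (\<theta> - \<gamma> *\<^sub>R H)) + real_of_ereal (g (prox g \<gamma> (\<theta> - \<gamma> *\<^sub>R H)))) - (f ts + gt))
         - 2 * \<gamma> * ((Tmap g df \<gamma> \<theta> - ts) \<bullet> (H - df \<theta>))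
         + 2 * \<gamma>^2 * norm (H - df \<theta>) ^ 2"
proof -
  define v where "v = prox g \<gamma> (\<theta> - \<gamma> *\<^sub>R H)"
  define T where "T = Tmap g df \<gamma> \<theta>"
  have vm: "v \<in> prox_set g \<gamma> (\<theta> - \<gamma> *\<^sub>R H)" unfolding v_def by (rule prox_mem[OF nm pr cv lsc gam])
  have Tm: "T \<in> prox_set g \<gamma> (\<theta> - \<gamma> *\<^sub>R df \<theta>)" unfolding T_def Tmap_def by (rule prox_mem[OF nm pr cv lsc gam])
  show "g (prox g \<gamma> (\<theta> - \<gamma> *\<^sub>R H)) \<noteq> \<infinity>" using prox_fin[OF pr vm] v_def by simp
  have gv: "g v = ereal (real_of_ereal (g v))" using prox_fin[OF pr vm] nm efin by blast
  define a where "a = real_of_ereal (g v)"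
  have P: "gt \<ge> a + ((\<theta> - v) \<bullet> (ts - v) - \<gamma> * (H \<bullet> (ts - v))) / \<gamma>"
  proof -
    have "gt \<ge> a + (((\<theta> - \<gamma> *\<^sub>R H) - v) \<bullet> (ts - v)) / \<gamma>"
      using prox_ineq[OF nm cv gam vm gv gts] a_def by simp
    moreover have "((\<theta> - \<gamma> *\<^sub>R H) - v) \<bullet> (ts - v) = (\<theta> - v) \<bullet> (ts - v) - \<gamma> * (H \<bullet> (ts - v))"
    proof -
      have "(\<theta> - \<gamma> *\<^sub>R H) - v = (\<theta> - v) - \<gamma> *\<^sub>R H" by (simp add: algebra_simps)
      then show ?thesis by (simp add: inner_diff_left)
    qed
    ultimately show ?thesis by simp
  qed
  have D: "f v \<le> f \<theta> + df \<theta> \<bullet> (v - \<theta>) + L / 2 * norm (v - \<theta>) ^ 2"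
    by (rule descent[OF f_grad f_lip])
  have C: "f ts \<ge> f \<theta> + df \<theta> \<bullet> (ts - \<theta>)" by (rule grad_ineq[OF f_grad f_convex])
  have BB: "df \<theta> \<bullet> (v - \<theta>) - df \<theta> \<bullet> (ts - \<theta>) = df \<theta> \<bullet> (v - ts)"
    by (simp add: inner_diff_right)
  have N: "norm (\<theta> - ts) ^ 2 = norm (v - \<theta>) ^ 2 + norm (v - ts) ^ 2 + 2 * ((\<theta> - v) \<bullet> (v - ts))"
  proof -
    have "\<theta> - ts = (\<theta> - v) + (v - ts)" by simp
    then have "norm (\<theta> - ts) ^ 2 = norm (\<theta> - v) ^ 2 + norm (v - ts) ^ 2 + 2 * ((\<theta> - v) \<bullet> (v - ts))"
      using norm_add_sq[of "\<theta> - v" "v - ts"] by simp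
    then show ?thesis by (simp add: norm_minus_commute)
  qed
  have AA: "(\<theta> - v) \<bullet> (v - ts) = - ((\<theta> - v) \<bullet> (ts - v))"
    by (metis inner_minus_right minus_diff_eq)
  have E: "(v - ts) \<bullet> (H - df \<theta>) = - (H \<bullet> (ts - v)) - df \<theta> \<bullet> (v - ts)"
    by (metis (no_types, lifting) inner_commute inner_diff_right inner_minus_right minus_diff_eq)
  have gL': "\<gamma> * L \<le> 1" using gL L_pos by (simp add: field_simps)
  have main: "norm (v - ts) ^ 2 \<le> norm (\<theta> - ts) ^ 2 - 2 * \<gamma> * ((f v + a) - (f ts + gt)) - 2 * \<gamma> * ((v - ts) \<bullet> (H - df \<theta>))"
    by (rule key_lin[OF P D C BB N AA gam gL' L_pos _ E]) simp
  have "norm (v - T) \<le> norm ((\<theta> - \<gamma> *\<^sub>R H) - (\<theta> - \<gamma> *\<^sub>R df \<theta>))"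
    by (rule prox_set_nonexp[OF nm pr cv gam vm Tm])
  also have "(\<theta> - \<gamma> *\<^sub>R H) - (\<theta> - \<gamma> *\<^sub>R df \<theta>) = - (\<gamma> *\<^sub>R (H - df \<theta>))" by (simp add: algebra_simps)
  finally have vT: "norm (v - T) \<le> \<gamma> * norm (H - df \<theta>)" using gam by simp
  have split: "(v - ts) \<bullet> (H - df \<theta>) = (T - ts) \<bullet> (H - df \<theta>) + (v - T) \<bullet> (H - df \<theta>)"
    by (metis diff_add_cancel inner_add_left add.commute diff_diff_eq2)
  have "- ((v - T) \<bullet> (H - df \<theta>)) \<le> norm (v - T) * norm (H - df \<theta>)"
    using norm_cauchy_schwarz[of "- (v - T)" "H - df \<theta>"] by (simp only: inner_minus_left norm_minus_cancel)
  also have "\<dots> \<le> \<gamma> * norm (H - df \<theta>) * norm (H - df \<theta>)" using vT by (intro mult_right_mono) auto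
  finally have cs: "- ((v - T) \<bullet> (H - df \<theta>)) \<le> \<gamma> * norm (H - df \<theta>) ^ 2" by (simp add: power2_eq_square)
  have "- 2 * \<gamma> * ((v - T) \<bullet> (H - df \<theta>)) \<le> 2 * \<gamma> * (\<gamma> * norm (H - df \<theta>) ^ 2)"
    using mult_left_mono[OF cs, of "2 * \<gamma>"] gam by simp
  then have "- 2 * \<gamma> * ((v - ts) \<bullet> (H - df \<theta>)) \<le> - 2 * \<gamma> * ((T - ts) \<bullet> (H - df \<theta>)) + 2 * \<gamma>^2 * norm (H - df \<theta>) ^ 2"
    unfolding split by (simp add: algebra_simps power2_eq_square)
  then show "norm (prox g \<gamma> (\<theta> - \<gamma> *\<^sub>R H) - ts) ^ 2
      \<le> norm (\<theta> - ts) ^ 2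
         - 2 * \<gamma> * ((f (prox g \<gamma> (\<theta> - \<gamma> *\<^sub>R H)) + real_of_ereal (g (prox g \<gamma> (\<theta> - \<gamma> *\<^sub>R H)))) - (f ts + gt))
         - 2 * \<gamma> * ((Tmap g df \<gamma> \<theta> - ts) \<bullet> (H - df \<theta>))
         + 2 * \<gamma>^2 * norm (H - df \<theta>) ^ 2"
    using main unfolding v_def[symmetric] T_def[symmetric] a_def by linarith
qed

lemma seq_part_i:
  fixes a c s :: "nat \<Rightarrow> real"
  assumes st: "\<And>k. a (Suc k) \<le> a k - 2 * c k + 2 * s k" and mn: "m \<le> n"
  shows "a (Suc n) \<le> a m - 2 * (\<Sum>k=m..n. c k) + 2 * (\<Sum>k=m..n. s k)"
  using mn
proof (induction n rule: dec_induct)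
  case base
  then show ?case using st[of m] by simp
next
  case (step n)
  have "a (Suc (Suc n)) \<le> a (Suc n) - 2 * c (Suc n) + 2 * s (Suc n)" by (rule st)
  also have "\<dots> \<le> a m - 2 * (\<Sum>k=m..n. c k) + 2 * (\<Sum>k=m..n. s k) - 2 * c (Suc n) + 2 * s (Suc n)"
    using step.IH by linarith
  also have "\<dots> = a m - 2 * (\<Sum>k=m..Suc n. c k) + 2 * (\<Sum>k=m..Suc n. s k)"
    using step.hyps by (simp add: algebra_simps)
  finally show ?case .
qed

lemma seq_conv:
  fixes a c s d :: "nat \<Rightarrow> real"
  assumes st: "\<And>k. a (Suc k) + 2 * d k \<le> a k - 2 * c k + 2 * s k"
    and d0: "\<And>k. d k \<ge> 0" and a0: "\<And>k. a k \<ge> 0"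
    and sc: "summable c" and ss: "summable s"
  shows "convergent a" "summable d"
proof -
  define p where "p n = 2 * (\<Sum>k<n. c k) - 2 * (\<Sum>k<n. s k)" for n
  define b where "b n = a n + p n" for n
  have pl: "p \<longlonglongrightarrow> 2 * suminf c - 2 * suminf s"
    unfolding p_def by (intro tendsto_intros summable_LIMSEQ sc ss)
  then obtain K where K: "\<And>n. norm (p n) \<le> K" using convergent_imp_Bseq[of p] convergent_def
    by (metis BseqE)
  have bstep: "b (Suc n) + 2 * d n \<le> b n" for n
  proof -
    have "p (Suc n) = p n + 2 * c n - 2 * s n" unfolding p_def by simp
    then show ?thesis unfolding b_def using st[of n] by linarith
  qed
  have bdec: "b (Suc n) \<le> b n" for n using bstep[of n] d0[of n] by linarith
  then have "decseq b" by (rule decseq_SucI)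
  have bup: "b n \<le> b 0" for n using \<open>decseq b\<close> by (simp add: decseq_def)
  have blow: "b n \<ge> - K" for n using a0[of n] K[of n] unfolding b_def by (auto simp: abs_le_iff)
  have "Bseq b"
  proof (rule BseqI')
    fix n show "norm (b n) \<le> max (abs (b 0)) K" using bup[of n] blow[of n] by (auto simp: abs_le_iff)
  qed
  then have "convergent b" using Bseq_monoseq_convergent decseq_imp_monoseq \<open>decseq b\<close> by blast
  then obtain lb where lb: "b \<longlonglongrightarrow> lb" by (auto simp: convergent_def)
  have "(\<lambda>n. b n - p n) \<longlonglongrightarrow> lb - (2 * suminf c - 2 * suminf s)" by (intro tendsto_intros lb pl)
  then show "convergent a" unfolding b_def convergent_def by auto
  have tel: "2 * (\<Sum>k<n. d k) \<le> b 0 - b n" for n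
  proof (induction n)
    case 0 then show ?case by simp
  next
    case (Suc n) then show ?case using bstep[of n] by simp
  qed
  show "summable d"
  proof (rule summableI_nonneg_bounded[where x = "(b 0 + K) / 2"])
    fix n show "0 \<le> d n" by (rule d0)
    show "(\<Sum>i<n. d i) \<le> (b 0 + K) / 2" using tel[of n] blow[of n] by (simp add: field_simps)
  qed
qed

theorem theorem4:
  fixes f :: "'a::euclidean_space \<Rightarrow> real" and df :: "'a \<Rightarrow> 'a"
    and g :: "'a \<Rightarrow> ereal" and L :: real
    and \<gamma> :: "nat \<Rightarrow> real" and \<theta> H :: "nat \<Rightarrow> 'a"
  assumes g_notminf: "\<forall>x. g x \<noteq> -\<infinity>"
    and g_proper: "\<exists>x. g x \<noteq> \<infinity>"
    and g_convex: "convex_ext g"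
    and g_lsc: "lsc_ext g"
    and f_grad: "\<forall>x. (f has_derivative (\<lambda>h. df x \<bullet> h)) (at x)"
    and f_grad_cont: "continuous_on UNIV df"
    and L_pos: "L > 0"
    and f_lip: "\<forall>x y. norm (df x - df y) \<le> L * norm (x - y)"
    and f_convex: "convex_on UNIV f"
    and argmin_ne: "{x. \<forall>y. ereal (f x) + g x \<le> ereal (f y) + g y} \<noteq> {}"
    and step_pos: "\<forall>n\<ge>1. 0 < \<gamma> n \<and> \<gamma> n \<le> 1 / L"
    and step_noninc: "\<forall>n\<ge>1. \<gamma> (Suc n) \<le> \<gamma> n"
    and theta0: "\<theta> 0 \<in> dom_ext g"
    and iter: "\<forall>n. \<theta> (Suc n) = prox g (\<gamma> (Suc n)) (\<theta> n - \<gamma> (Suc n) *\<^sub>R H (Suc n))"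
  shows
    "(\<forall>ts \<in> {x. \<forall>y. ereal (f x) + g x \<le> ereal (f y) + g y}. \<forall>m n. m \<le> n \<longrightarrow>
        norm (\<theta> (Suc n) - ts) ^ 2
          \<le> norm (\<theta> m - ts) ^ 2
             - 2 * (\<Sum>k=m..n. \<gamma> (Suc k) *
                   ((Tmap g df (\<gamma> (Suc k)) (\<theta> k) - ts) \<bullet> (H (Suc k) - df (\<theta> k))))
             + 2 * (\<Sum>k=m..n. \<gamma> (Suc k) ^ 2 * norm (H (Suc k) - df (\<theta> k)) ^ 2))
     \<and>
     ((\<forall>ts \<in> {x. \<forall>y. ereal (f x) + g x \<le> ereal (f y) + g y}.
          summable (\<lambda>k. \<gamma> (Suc k) *
                   ((Tmap g df (\<gamma> (Suc k)) (\<theta> k) - ts) \<bullet> (H (Suc k) - df (\<theta> k)))))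
       \<and> summable (\<lambda>k. \<gamma> (Suc k) ^ 2 * norm (H (Suc k) - df (\<theta> k)) ^ 2)
      \<longrightarrow>
        (\<forall>ts \<in> {x. \<forall>y. ereal (f x) + g x \<le> ereal (f y) + g y}.
            convergent (\<lambda>n. norm (\<theta> n - ts)))
        \<and> (\<not> summable (\<lambda>n. \<gamma> (Suc n)) \<longrightarrow>
            (\<exists>tinf \<in> {x. \<forall>y. ereal (f x) + g x \<le> ereal (f y) + g y}. \<theta> \<longlonglongrightarrow> tinf)))"
proof -
  let ?Ls = "{x. \<forall>y. ereal (f x) + g x \<le> ereal (f y) + g y}"
  have gpos: "0 < \<gamma> (Suc n)" for n using step_pos by auto
  have gle: "\<gamma> (Suc n) \<le> 1 / L" for n using step_pos by auto
  define c where "c ts k = \<gamma> (Suc k) * ((Tmap g df (\<gamma> (Suc k)) (\<theta> k) - ts) \<bullet> (H (Suc k) - df (\<theta> k)))" for ts k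
  define s where "s k = \<gamma> (Suc k) ^ 2 * norm (H (Suc k) - df (\<theta> k)) ^ 2" for k
  define Fv where "Fv x = f x + real_of_ereal (g x)" for x
  have tsfin: "g ts \<noteq> \<infinity>" if "ts \<in> ?Ls" for ts
  proof
    assume "g ts = \<infinity>"
    obtain x1 where "g x1 \<noteq> \<infinity>" using g_proper by blast
    moreover have "ereal (f ts) + g ts \<le> ereal (f x1) + g x1" using that by blast
    ultimately show False using \<open>g ts = \<infinity>\<close> g_notminf by (cases "g x1") auto
  qed
  have tsmin: "Fv ts \<le> Fv y" if "ts \<in> ?Ls" "g y \<noteq> \<infinity>" for ts y
  proof -
    have a: "g ts = ereal (real_of_ereal (g ts))" using tsfin[OF that(1)] g_notminf efin by blast
    have b: "g y = ereal (real_of_ereal (g y))" using that(2) g_notminf efin by blast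
    have "ereal (f ts) + g ts \<le> ereal (f y) + g y" using that(1) by blast
    then have "ereal (f ts) + ereal (real_of_ereal (g ts)) \<le> ereal (f y) + ereal (real_of_ereal (g y))"
      using a b by simp
    then show ?thesis unfolding Fv_def by simp
  qed
  obtain ts0 where ts0: "ts0 \<in> ?Ls" using argmin_ne by blast
  have pit: "prox g (\<gamma> (Suc n)) (\<theta> n - \<gamma> (Suc n) *\<^sub>R H (Suc n)) = \<theta> (Suc n)" for n
    using iter by simp
  have thfin: "g (\<theta> (Suc n)) \<noteq> \<infinity>" for n
  proof -
    have a: "g ts0 = ereal (real_of_ereal (g ts0))" using tsfin[OF ts0] g_notminf efin by blast
    show ?thesis using key_step(1)[OF g_notminf g_proper g_convex g_lsc f_grad L_pos f_lip f_convex gpos[of n] gle[of n] a,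
      of "\<theta> n" "H (Suc n)"] unfolding pit .
  qed
  have stepE: "norm (\<theta> (Suc n) - ts) ^ 2 + 2 * (\<gamma> (Suc n) * (Fv (\<theta> (Suc n)) - Fv ts))
      \<le> norm (\<theta> n - ts) ^ 2 - 2 * c ts n + 2 * s n" if ts: "ts \<in> ?Ls" for ts n
  proof -
    have a: "g ts = ereal (real_of_ereal (g ts))" using tsfin[OF ts] g_notminf efin by blast
    note ks = key_step(2)[OF g_notminf g_proper g_convex g_lsc f_grad L_pos f_lip f_convex gpos[of n] gle[of n] a,
      of "\<theta> n" "H (Suc n)", unfolded pit]
    show ?thesis using ks unfolding c_def s_def Fv_def by (simp add: algebra_simps)
  qed
  have step: "norm (\<theta> (Suc n) - ts) ^ 2 \<le> norm (\<theta> n - ts) ^ 2 - 2 * c ts n + 2 * s n"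
    if ts: "ts \<in> ?Ls" for ts n
  proof -
    have "0 \<le> \<gamma> (Suc n) * (Fv (\<theta> (Suc n)) - Fv ts)"
      using tsmin[OF ts thfin[of n]] gpos[of n] by simp
    then show ?thesis using stepE[OF ts, of n] by linarith
  qed
  have part1: "\<forall>ts \<in> ?Ls. \<forall>m n. m \<le> n \<longrightarrow>
        norm (\<theta> (Suc n) - ts) ^ 2
          \<le> norm (\<theta> m - ts) ^ 2
             - 2 * (\<Sum>k=m..n. \<gamma> (Suc k) *
                   ((Tmap g df (\<gamma> (Suc k)) (\<theta> k) - ts) \<bullet> (H (Suc k) - df (\<theta> k))))
             + 2 * (\<Sum>k=m..n. \<gamma> (Suc k) ^ 2 * norm (H (Suc k) - df (\<theta> k)) ^ 2)"
  proof (intro ballI allI impI)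
    fix ts m n assume ts: "ts \<in> ?Ls" and mn: "(m::nat) \<le> n"
    show "norm (\<theta> (Suc n) - ts) ^ 2
          \<le> norm (\<theta> m - ts) ^ 2
             - 2 * (\<Sum>k=m..n. \<gamma> (Suc k) *
                   ((Tmap g df (\<gamma> (Suc k)) (\<theta> k) - ts) \<bullet> (H (Suc k) - df (\<theta> k))))
             + 2 * (\<Sum>k=m..n. \<gamma> (Suc k) ^ 2 * norm (H (Suc k) - df (\<theta> k)) ^ 2)"
      using seq_part_i[where a = "\<lambda>k. norm (\<theta> k - ts) ^ 2" and c = "c ts" and s = s, OF step[OF ts] mn]
      unfolding c_def s_def .
  qed
  show ?thesis
  proof (intro conjI part1 impI)
    assume hyp: "(\<forall>ts \<in> ?Ls.
          summable (\<lambda>k. \<gamma> (Suc k) *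
                   ((Tmap g df (\<gamma> (Suc k)) (\<theta> k) - ts) \<bullet> (H (Suc k) - df (\<theta> k)))))
       \<and> summable (\<lambda>k. \<gamma> (Suc k) ^ 2 * norm (H (Suc k) - df (\<theta> k)) ^ 2)"
    have sc: "summable (c ts)" if "ts \<in> ?Ls" for ts using hyp that unfolding c_def by blast
    have ss: "summable s" using hyp unfolding s_def by blast
    have conv: "convergent (\<lambda>n. norm (\<theta> n - ts) ^ 2)" and sd: "summable (\<lambda>n. \<gamma> (Suc n) * (Fv (\<theta> (Suc n)) - Fv ts))"
      if ts: "ts \<in> ?Ls" for ts
    proof -
      have d0: "0 \<le> \<gamma> (Suc n) * (Fv (\<theta> (Suc n)) - Fv ts)" for n
        using tsmin[OF ts thfin[of n]] gpos[of n] by simp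
      show "convergent (\<lambda>n. norm (\<theta> n - ts) ^ 2)"
        by (rule seq_conv(1)[where d = "\<lambda>n. \<gamma> (Suc n) * (Fv (\<theta> (Suc n)) - Fv ts)", OF stepE[OF ts] d0 _ sc[OF ts] ss]) simp
      show "summable (\<lambda>n. \<gamma> (Suc n) * (Fv (\<theta> (Suc n)) - Fv ts))"
        by (rule seq_conv(2)[where a = "\<lambda>k. norm (\<theta> k - ts) ^ 2", OF stepE[OF ts] d0 _ sc[OF ts] ss]) simp
    qed
    have conv1: "convergent (\<lambda>n. norm (\<theta> n - ts))" if ts: "ts \<in> ?Ls" for ts
    proof -
      obtain l where l: "(\<lambda>n. norm (\<theta> n - ts) ^ 2) \<longlonglongrightarrow> l" using conv[OF ts] by (auto simp: convergent_def)
      have "(\<lambda>n. sqrt (norm (\<theta> n - ts) ^ 2)) \<longlonglongrightarrow> sqrt l" by (intro tendsto_intros l)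
      then show ?thesis unfolding convergent_def by auto
    qed
    show "\<forall>ts \<in> ?Ls. convergent (\<lambda>n. norm (\<theta> n - ts))" using conv1 by blast
    assume nsum: "\<not> summable (\<lambda>n. \<gamma> (Suc n))"
    define e where "e n = Fv (\<theta> (Suc n)) - Fv ts0" for n
    have e0: "e n \<ge> 0" for n unfolding e_def using tsmin[OF ts0 thfin[of n]] by simp
    have sd0: "summable (\<lambda>n. \<gamma> (Suc n) * e n)" using sd[OF ts0] unfolding e_def .
    have freq: "\<exists>n\<ge>N. e n < \<epsilon>" if eps: "\<epsilon> > 0" for \<epsilon> N
    proof (rule ccontr)
      assume "\<not> ?thesis"
      then have ge: "e n \<ge> \<epsilon>" if "n \<ge> N" for n using that by (meson not_less)
      have "summable (\<lambda>n. \<gamma> (Suc n))"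
      proof (rule summable_comparison_test'[where N = N])
        show "summable (\<lambda>n. \<gamma> (Suc n) * e n / \<epsilon>)" using sd0 by (rule summable_divide)
        fix n :: nat assume "N \<le> n"
        then have "\<gamma> (Suc n) * \<epsilon> \<le> \<gamma> (Suc n) * e n" using ge gpos[of n] by (intro mult_left_mono) auto
        then show "norm (\<gamma> (Suc n)) \<le> \<gamma> (Suc n) * e n / \<epsilon>"
          using gpos[of n] eps by (simp add: field_simps)
      qed
      then show False using nsum by blast
    qed
    have "\<forall>j. \<exists>n. j \<le> n \<and> e n < inverse (real (Suc j))" using freq by simp
    then obtain nn where nn: "\<And>j. j \<le> nn j" "\<And>j. e (nn j) < inverse (real (Suc j))" by metis
    define u where "u j = \<theta> (Suc (nn j))" for j
    obtain K where K: "\<And>n. norm (norm (\<theta> n - ts0)) \<le> K"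
      using convergent_imp_Bseq[OF conv1[OF ts0]] by (metis BseqE)
    have "bounded (range u)"
      unfolding bounded_iff
    proof (intro exI ballI)
      fix x assume "x \<in> range u"
      then obtain j where x: "x = \<theta> (Suc (nn j))" unfolding u_def by blast
      have "norm x \<le> norm (x - ts0) + norm ts0" using norm_triangle_ineq[of "x - ts0" ts0] by simp
      then show "norm x \<le> K + norm ts0" using K[of "Suc (nn j)"] x by simp
    qed
    then obtain tinf r where r: "strict_mono r" and ur: "(u \<circ> r) \<longlonglongrightarrow> tinf"
      using bounded_imp_convergent_subsequence by blast
    have ul: "(\<lambda>j. u (r j)) \<longlonglongrightarrow> tinf" using ur by (simp add: o_def)
    have fcont: "isCont f tinf" using f_grad has_derivative_continuous by blast
    define Fm where "Fm = Fv ts0"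
    have inv0: "(\<lambda>j. inverse (real (Suc (r j)))) \<longlonglongrightarrow> 0"
      using LIMSEQ_subseq_LIMSEQ[OF LIMSEQ_inverse_real_of_nat r] by (simp add: o_def)
    have ule: "real_of_ereal (g (u (r j))) \<le> Fm + inverse (real (Suc (r j))) - f (u (r j))" for j
      using nn(2)[of "r j"] unfolding e_def Fm_def Fv_def u_def by simp
    have lim2: "(\<lambda>j. Fm + inverse (real (Suc (r j))) - f (u (r j))) \<longlonglongrightarrow> Fm + 0 - f tinf"
      by (intro tendsto_intros inv0 isCont_tendsto_compose[OF fcont ul])
    have gt_eps: "g tinf \<le> ereal (Fm - f tinf) + ereal \<epsilon>" if eps: "\<epsilon> > 0" for \<epsilon>
    proof -
      have cl: "closed {w. g w \<le> ereal (Fm - f tinf + \<epsilon>)}" using g_lsc unfolding lsc_ext_def by blast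
      have "eventually (\<lambda>j. Fm + inverse (real (Suc (r j))) - f (u (r j)) < Fm - f tinf + \<epsilon>) sequentially"
        using lim2 eps by (intro order_tendstoD) auto
      then have ev: "eventually (\<lambda>j. u (r j) \<in> {w. g w \<le> ereal (Fm - f tinf + \<epsilon>)}) sequentially"
      proof (rule eventually_mono)
        fix j assume "Fm + inverse (real (Suc (r j))) - f (u (r j)) < Fm - f tinf + \<epsilon>"
        then have "real_of_ereal (g (u (r j))) \<le> Fm - f tinf + \<epsilon>" using ule[of j] by linarith
        moreover have "g (u (r j)) = ereal (real_of_ereal (g (u (r j))))"
          using thfin g_notminf efin unfolding u_def by blast
        ultimately show "u (r j) \<in> {w. g w \<le> ereal (Fm - f tinf + \<epsilon>)}" by (metis ereal_less_eq(3) mem_Collect_eq)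
      qed
      have "tinf \<in> {w. g w \<le> ereal (Fm - f tinf + \<epsilon>)}" by (rule Lim_in_closed_set[OF cl ev _ ul]) simp
      then show ?thesis by simp
    qed
    have gtinf: "g tinf \<le> ereal (Fm - f tinf)" by (rule ereal_le_epsilon2) (use gt_eps in auto)
    have tinfL: "tinf \<in> ?Ls"
    proof (intro CollectI allI)
      fix y
      have a0: "g ts0 = ereal (real_of_ereal (g ts0))" using tsfin[OF ts0] g_notminf efin by blast
      have "ereal (f tinf) + g tinf \<le> ereal (f tinf) + ereal (Fm - f tinf)"
        using gtinf by (rule add_left_mono)
      also have "\<dots> = ereal Fm" by simp
      also have "\<dots> = ereal (f ts0) + g ts0" unfolding Fm_def Fv_def using a0 by (metis plus_ereal.simps(1))
      also have "\<dots> \<le> ereal (f y) + g y" using ts0 by blast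
      finally show "ereal (f tinf) + g tinf \<le> ereal (f y) + g y" .
    qed
    obtain l where l: "(\<lambda>n. norm (\<theta> n - tinf)) \<longlonglongrightarrow> l" using conv1[OF tinfL] by (auto simp: convergent_def)
    define kk where "kk j = Suc (nn (r j))" for j
    have kk: "filterlim kk sequentially sequentially"
    proof (rule filterlim_at_top_mono[OF filterlim_ident])
      show "eventually (\<lambda>j. j \<le> kk j) sequentially"
      proof (rule always_eventually, rule allI)
        fix j
        have "j \<le> r j" using r by (rule seq_suble)
        also have "\<dots> \<le> nn (r j)" by (rule nn(1))
        finally show "j \<le> kk j" unfolding kk_def by simp
      qed
    qed
    have l1: "(\<lambda>j. norm (\<theta> (kk j) - tinf)) \<longlonglongrightarrow> l" using filterlim_compose[OF l kk] .
    have l2: "(\<lambda>j. norm (\<theta> (kk j) - tinf)) \<longlonglongrightarrow> 0"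
    proof -
      have "(\<lambda>j. u (r j) - tinf) \<longlonglongrightarrow> 0" using ul by (rule LIM_zero)
      then have "(\<lambda>j. norm (u (r j) - tinf)) \<longlonglongrightarrow> 0" by (rule tendsto_norm_zero)
      then show ?thesis unfolding kk_def u_def .
    qed
    have "l = 0" using LIMSEQ_unique[OF l1 l2] .
    then have "(\<lambda>n. \<theta> n - tinf) \<longlonglongrightarrow> 0" using l tendsto_norm_zero_iff by blast
    then have "\<theta> \<longlonglongrightarrow> tinf" by (simp add: LIM_zero_iff)
    then show "\<exists>tinf \<in> ?Ls. \<theta> \<longlonglongrightarrow> tinf" using tinfL by blast
  qed
qed

end
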